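(* Consider a generalized linear model with data $\mathcal{D}=(X,\mathbf{y})$, $X\in\mathbb{R}^{n\times(p+1)}$ whose first column is the intercept column of ones, whose next $m$ columns are mandatory predictors, and whose remaining $p-m$ columns form the matrix $X_u\in\mathbb{R}^{n\times(p-m)}$. Suppose the log-likelihood depends on $(\beta_0,\boldsymbol{\beta})$ only through the linear predictor $\eta=\eta_0(\beta_0,\boldsymbol{\beta})+X_u\boldsymbol{\beta}_u\in\mathbb{R}^n$, where $\boldsymbol{\beta}_u\in\mathbb{R}^{p-m}$ are the non-mandatory coefficients and $\eta_0$ collects the intercept and mandatory contributions; write $-\frac1n\ell$ as a twice differentiable function of $\eta$ and let $H_\eta(\eta)=\nabla^2_{\eta\eta}\bigl(-\tfrac1n\ell\bigr)(\eta)$. Fix $\lambda\ge0$ and $\delta>0$. For $\mathbf{t}\in[0,1]^{p-m}$ let $T_{\mathbf{t}}=\mathrm{diag}(1,\dots,1,t_1,\dots,t_{p-m})$ (with $m$ leading ones), $\Gamma_{\mathbf{t}}=\sqrt{I-T_{\mathbf{t}}^2}$, $$h_{\delta,\lambda}(\mathbf{t},\beta_0,\boldsymbol{\beta})=-\tfrac1n\ell(\beta_0,T_{\mathbf{t}}\boldsymbol{\beta};\mathcal{D})+\lambda\|\boldsymbol{\beta}\|_2^2+\delta\|\Gamma_{\mathbf{t}}\boldsymbol{\beta}\|_2^2,\qquad f_{\delta,\lambda}(\mathbf{t})=\inf_{\beta_0,\boldsymbol{\beta}}h_{\delta,\lambda}(\mathbf{t},\beta_0,\boldsymbol{\beta}).$$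 Let $\mathcal{T}_k=\{\mathbf{t}\in[0,1]^{p-m}:\mathbf{1}^\top\mathbf{t}=k\}$ and $\mathcal{S}_k=\{\mathbf{s}\in\{0,1\}^{p-m}:\mathbf{1}^\top\mathbf{s}=k\}$. Assume $X_u^\top H_\eta(\eta)X_u\preceq 2\delta I$ for all $\eta$. Then for every fixed $(\beta_0,\boldsymbol{\beta})$ the map $\mathbf{t}\mapsto h_{\delta,\lambda}(\mathbf{t},\beta_0,\boldsymbol{\beta})$ is concave on $(0,1)^{p-m}$. Consequently $f_{\delta,\lambda}$ is concave on $(0,1)^{p-m}$ (and extends concavely to $\mathcal{T}_k$), so a minimizer of $\min_{\mathbf{t}\in\mathcal{T}_k}f_{\delta,\lambda}(\mathbf{t})$ can be chosen at a corner $\mathbf{s}\in\mathcal{S}_k$.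
   Context: $\preceq$ denotes the Loewner (positive semidefinite) order. $\ell$ is the GLM log-likelihood; $T_{\mathbf{t}}\boldsymbol{\beta}=(\beta_1,\dots,\beta_m,t_1\beta_{m+1},\dots,t_{p-m}\beta_p)$, so the linear predictor at $(\beta_0,T_{\mathbf{t}}\boldsymbol{\beta})$ is $\eta_0(\beta_0,\boldsymbol{\beta})+X_u(\mathbf{t}\odot\boldsymbol{\beta}_u)$, with $\odot$ the elementwise product. *)

theory Defs
  imports "HOL-Analysis.Analysis"
begin

text \<open>Coefficient vector beta (without intercept) is indexed by a finite type 'p
  (all p predictors); the set U of indices is the non-mandatory ones, the
  complement are the m mandatory ones.
  The mask t lives in real^'p with t$i = 1 fixed for mandatory i, so that
  T_t = diag(t).  X :: real^'p^'n are the non-intercept columns of the design.\<close>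

definition loewner_le :: "real^'a^'a \<Rightarrow> real^'a^'a \<Rightarrow> bool" where
  "loewner_le A B \<longleftrightarrow> (\<forall>x. x \<bullet> (A *v x) \<le> x \<bullet> (B *v x))"

definition Xu_of :: "'p set \<Rightarrow> real^'p^'n \<Rightarrow> real^'p^'n" where
  "Xu_of U X = (\<chi> j k. if k \<in> U then X$j$k else 0)"

definition lin_pred :: "real^'p^'n \<Rightarrow> real^'p \<Rightarrow> real \<Rightarrow> real^'p \<Rightarrow> real^'n" where
  "lin_pred X t b0 b = (\<chi> j. b0) + X *v (\<chi> i. t$i * b$i)"

text \<open>h_{delta,lambda}(t, beta0, beta); L is -(1/n) * loglikelihood as a function of eta.\<close>
definition hobj :: "(real^'n \<Rightarrow> real) \<Rightarrow> real^'p^'n \<Rightarrow> real \<Rightarrow> real \<Rightarrow>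
                    real^'p \<Rightarrow> real \<Rightarrow> real^'p \<Rightarrow> real" where
  "hobj L X lam del t b0 b =
     L (lin_pred X t b0 b) + lam * (norm b)^2
     + del * (norm (\<chi> i. sqrt (1 - (t$i)^2) * b$i))^2"

definition fobj :: "(real^'n \<Rightarrow> real) \<Rightarrow> real^'p^'n \<Rightarrow> real \<Rightarrow> real \<Rightarrow> real^'p \<Rightarrow> ereal" where
  "fobj L X lam del t = (INF bb \<in> (UNIV :: (real \<times> (real^'p)) set).
                           ereal (hobj L X lam del t (fst bb) (snd bb)))"

definition ereal_concave_on :: "('a::real_vector) set \<Rightarrow> ('a \<Rightarrow> ereal) \<Rightarrow> bool" where
  "ereal_concave_on S f \<longleftrightarrow> (\<forall>x\<in>S. \<forall>y\<in>S. \<forall>a::real. 0 \<le> a \<and> a \<le> 1 \<longrightarrow>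
      ereal a * f x + ereal (1 - a) * f y \<le> f (a *\<^sub>R x + (1 - a) *\<^sub>R y))"

definition open_box :: "'p set \<Rightarrow> (real^'p) set" where
  "open_box U = {t. (\<forall>i\<in>U. 0 < t$i \<and> t$i < 1) \<and> (\<forall>i. i \<notin> U \<longrightarrow> t$i = 1)}"

definition Tset :: "'p set \<Rightarrow> nat \<Rightarrow> (real^'p) set" where
  "Tset U k = {t. (\<forall>i\<in>U. 0 \<le> t$i \<and> t$i \<le> 1) \<and> (\<forall>i. i \<notin> U \<longrightarrow> t$i = 1)
                  \<and> (\<Sum>i\<in>U. t$i) = real k}"

definition Sset :: "'p set \<Rightarrow> nat \<Rightarrow> (real^'p) set" where
  "Sset U k = {s. (\<forall>i\<in>U. s$i = 0 \<or> s$i = 1) \<and> (\<forall>i. i \<notin> U \<longrightarrow> s$i = 1)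
                  \<and> (\<Sum>i\<in>U. s$i) = real k}"

end

theory Submission
  imports Defs
begin

lemma quad_form:
  fixes M :: "real^'p^'n" and H :: "real^'n^'n"
  shows "v \<bullet> ((transpose M ** H ** M) *v v) = (M *v v) \<bullet> (H *v (M *v v))"
proof -
  have "(transpose M ** H ** M) *v v = transpose M *v (H *v (M *v v))"
    by (simp add: matrix_vector_mul_assoc matrix_mul_assoc)
  also have "\<dots> = (H *v (M *v v)) v* M" by simp
  finally show ?thesis by (metis inner_commute dot_lmul_matrix)
qed

lemma lin_pred_affine:
  "lin_pred X (y + u *\<^sub>R d) b0 b = lin_pred X y b0 b + u *\<^sub>R (X *v (\<chi> i. d$i * b$i))"
proof -
  have "(\<chi> i. (y + u *\<^sub>R d)$i * b$i) = (\<chi> i. y$i * b$i) + u *\<^sub>R (\<chi> i. d$i * b$i)"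
    by (simp add: vec_eq_iff algebra_simps)
  then show ?thesis
    by (simp add: lin_pred_def matrix_vector_right_distrib matrix_vector_mult_scaleR)
qed

lemma Xu_mult:
  assumes "\<And>i. i \<notin> U \<Longrightarrow> z$i = 0"
  shows "Xu_of U X *v z = X *v z"
  using assms unfolding Xu_of_def
  by (auto simp: vec_eq_iff matrix_vector_mult_def intro!: sum.cong)

lemma norm_sqrt_term:
  assumes "\<And>i. 0 \<le> t$i \<and> t$i \<le> 1"
  shows "(norm (\<chi> i. sqrt (1 - (t$i)^2) * b$i))^2 = (\<Sum>i\<in>UNIV. (1 - (t$i)^2) * (b$i)^2)"
proof -
  have aux: "sqrt a * c * (sqrt a * c) = a * c^2" if "0 \<le> a" for a c :: real
  proof -
    have "sqrt a * c * (sqrt a * c) = (sqrt a * sqrt a) * (c * c)" by (simp add: algebra_simps)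
    then show ?thesis using that by (simp add: power2_eq_square)
  qed
  have "\<And>i. 0 \<le> 1 - (t$i)^2" using assms by (simp add: power_le_one)
  then show ?thesis
    by (simp add: power2_norm_eq_inner inner_vec_def aux)
qed

definition cl_box :: "'p set \<Rightarrow> (real^'p) set" where
  "cl_box U = {t. (\<forall>i\<in>U. 0 \<le> t$i \<and> t$i \<le> 1) \<and> (\<forall>i. i \<notin> U \<longrightarrow> t$i = 1)}"

lemma cl_box_all: "t \<in> cl_box U \<Longrightarrow> 0 \<le> t$i \<and> t$i \<le> 1"
  unfolding cl_box_def by (cases "i \<in> U") auto

lemma psi_concave:
  fixes L :: "real^'n \<Rightarrow> real"
    and G :: "real^'n \<Rightarrow> real^'n"
    and H :: "real^'n \<Rightarrow> real^'n^'n"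
    and X :: "real^'p^'n"
  assumes grad: "\<And>eta. (L has_derivative (\<lambda>v. G eta \<bullet> v)) (at eta)"
    and hess: "\<And>eta. (G has_derivative (\<lambda>v. H eta *v v)) (at eta)"
    and del: "del > 0"
    and bound: "\<And>eta. loewner_le (transpose (Xu_of U X) ** H eta ** Xu_of U X)
                                   ((2 * del) *\<^sub>R mat 1)"
    and dU: "\<And>i. i \<notin> U \<Longrightarrow> d$i = 0"
  shows "convex_on UNIV (\<lambda>s. - (L (c + s *\<^sub>R (X *v (\<chi> i. d$i * b$i)))
            + del * (\<Sum>i\<in>UNIV. (1 - (y$i + s * d$i)^2) * (b$i)^2)))"
proof -
  define z where "z = (\<chi> i. d$i * b$i)"
  define w where "w = X *v z"
  have zU: "\<And>i. i \<notin> U \<Longrightarrow> z$i = 0" using dU by (simp add: z_def)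
  have Xuz: "Xu_of U X *v z = w" using Xu_mult[OF zU] by (simp add: w_def)
  have lin: "((\<lambda>s. c + s *\<^sub>R w) has_derivative (\<lambda>h. h *\<^sub>R w)) (at s)" for s :: real
    by (auto intro!: derivative_eq_intros)
  have d1: "((\<lambda>s. L (c + s *\<^sub>R w)) has_real_derivative (G (c + s *\<^sub>R w) \<bullet> w)) (at s)" for s
  proof -
    have "((\<lambda>s. L (c + s *\<^sub>R w)) has_derivative (\<lambda>h. G (c + s *\<^sub>R w) \<bullet> (h *\<^sub>R w))) (at s)"
      using has_derivative_compose[OF lin grad] .
    then show ?thesis unfolding has_field_derivative_def
      by (rule has_derivative_eq_rhs) (simp add: fun_eq_iff mult.commute)
  qed
  have d2: "((\<lambda>s. G (c + s *\<^sub>R w) \<bullet> w) has_real_derivative ((H (c + s *\<^sub>R w) *v w) \<bullet> w)) (at s)" for s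
  proof -
    have "((\<lambda>s. G (c + s *\<^sub>R w)) has_derivative (\<lambda>h. H (c + s *\<^sub>R w) *v (h *\<^sub>R w))) (at s)"
      using has_derivative_compose[OF lin hess] .
    then have "((\<lambda>s. G (c + s *\<^sub>R w) \<bullet> w) has_derivative (\<lambda>h. (H (c + s *\<^sub>R w) *v (h *\<^sub>R w)) \<bullet> w)) (at s)"
      by (rule has_derivative_inner_left)
    then show ?thesis unfolding has_field_derivative_def
      by (rule has_derivative_eq_rhs) (simp add: fun_eq_iff matrix_vector_mult_scaleR mult.commute)
  qed
  have d3: "((\<lambda>s. \<Sum>i\<in>UNIV. (1 - (y$i + s * d$i)^2) * (b$i)^2) has_real_derivative
              (\<Sum>i\<in>UNIV. - 2 * (y$i + s * d$i) * d$i * (b$i)^2)) (at s)" for s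
    by (rule DERIV_sum, auto intro!: derivative_eq_intros simp: algebra_simps)
  have d4: "((\<lambda>s. \<Sum>i\<in>UNIV. - 2 * (y$i + s * d$i) * d$i * (b$i)^2) has_real_derivative
              (\<Sum>i\<in>UNIV. - 2 * d$i * d$i * (b$i)^2)) (at s)" for s
    by (rule DERIV_sum, auto intro!: derivative_eq_intros simp: algebra_simps)
  have nonpos: "(H (c + s *\<^sub>R w) *v w) \<bullet> w + del * (\<Sum>i\<in>UNIV. - 2 * d$i * d$i * (b$i)^2) \<le> 0" for s
  proof -
    have "z \<bullet> ((transpose (Xu_of U X) ** H (c + s *\<^sub>R w) ** Xu_of U X) *v z)
          \<le> z \<bullet> (((2 * del) *\<^sub>R mat 1) *v z)"
      using bound unfolding loewner_le_def by blast
    moreover have "z \<bullet> ((transpose (Xu_of U X) ** H (c + s *\<^sub>R w) ** Xu_of U X) *v z)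
          = (H (c + s *\<^sub>R w) *v w) \<bullet> w"
      by (simp add: quad_form Xuz inner_commute)
    moreover have "z \<bullet> (((2 * del) *\<^sub>R mat 1) *v z) = 2 * del * (\<Sum>i\<in>UNIV. d$i * d$i * (b$i)^2)"
      by (simp add: scaleR_matrix_vector_assoc[symmetric] inner_vec_def z_def sum_distrib_left power2_eq_square algebra_simps)
    moreover have "del * (\<Sum>i\<in>UNIV. - 2 * d$i * d$i * (b$i)^2) = - (2 * del * (\<Sum>i\<in>UNIV. d$i * d$i * (b$i)^2))"
      by (simp add: sum_distrib_left sum_negf algebra_simps)
    ultimately show ?thesis by linarith
  qed
  have "convex_on UNIV (\<lambda>s. - (L (c + s *\<^sub>R w) + del * (\<Sum>i\<in>UNIV. (1 - (y$i + s * d$i)^2) * (b$i)^2)))"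
  proof (rule f''_ge0_imp_convex[where f' = "\<lambda>s. - (G (c + s *\<^sub>R w) \<bullet> w + del * (\<Sum>i\<in>UNIV. - 2 * (y$i + s * d$i) * d$i * (b$i)^2))"
         and f'' = "\<lambda>s. - ((H (c + s *\<^sub>R w) *v w) \<bullet> w + del * (\<Sum>i\<in>UNIV. - 2 * d$i * d$i * (b$i)^2))"])
    show "convex (UNIV :: real set)" by simp
    show "((\<lambda>s. - (L (c + s *\<^sub>R w) + del * (\<Sum>i\<in>UNIV. (1 - (y$i + s * d$i)^2) * (b$i)^2))) has_real_derivative
      - (G (c + s *\<^sub>R w) \<bullet> w + del * (\<Sum>i\<in>UNIV. - 2 * (y$i + s * d$i) * d$i * (b$i)^2))) (at s)" for s
      by (intro DERIV_minus DERIV_add d1 DERIV_cmult d3)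
    show "((\<lambda>s. - (G (c + s *\<^sub>R w) \<bullet> w + del * (\<Sum>i\<in>UNIV. - 2 * (y$i + s * d$i) * d$i * (b$i)^2))) has_real_derivative
      - ((H (c + s *\<^sub>R w) *v w) \<bullet> w + del * (\<Sum>i\<in>UNIV. - 2 * d$i * d$i * (b$i)^2))) (at s)" for s
      by (intro DERIV_minus DERIV_add d2 DERIV_cmult d4)
    show "0 \<le> - ((H (c + s *\<^sub>R w) *v w) \<bullet> w + del * (\<Sum>i\<in>UNIV. - 2 * d$i * d$i * (b$i)^2))" for s
      using nonpos[of s] by linarith
  qed
  then show ?thesis by (simp add: w_def z_def)
qed


lemma convex_cl_box: "convex (cl_box U)"
proof (rule convexI)
  fix x y :: "real^'a" and u v :: real
  assume x: "x \<in> cl_box U" and y: "y \<in> cl_box U" and u: "0 \<le> u" and v: "0 \<le> v" and uv: "u + v = 1"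
  show "u *\<^sub>R x + v *\<^sub>R y \<in> cl_box U"
    unfolding cl_box_def
  proof (intro CollectI conjI ballI allI impI)
    fix i assume "i \<in> U"
    then have a: "0 \<le> x$i" "x$i \<le> 1" "0 \<le> y$i" "y$i \<le> 1" using x y by (auto simp: cl_box_def)
    show "0 \<le> (u *\<^sub>R x + v *\<^sub>R y) $ i" using a u v by simp
    have "u * x $ i + v * y $ i \<le> u * 1 + v * 1"
      using a u v by (intro add_mono mult_left_mono) auto
    then show "(u *\<^sub>R x + v *\<^sub>R y) $ i \<le> 1" using uv by simp
  next
    fix i assume "i \<notin> U" then show "(u *\<^sub>R x + v *\<^sub>R y) $ i = 1" using x y uv by (simp add: cl_box_def)
  qed
qed

lemma hobj_cl_box:
  "t \<in> cl_box U \<Longrightarrow> hobj L X lam del t b0 b =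
     L (lin_pred X t b0 b) + lam * (norm b)^2 + del * (\<Sum>i\<in>UNIV. (1 - (t$i)^2) * (b$i)^2)"
  unfolding hobj_def using norm_sqrt_term[of t b] cl_box_all[of t U] by simp

lemma h_concave:
  fixes L :: "real^'n \<Rightarrow> real"
    and G :: "real^'n \<Rightarrow> real^'n"
    and H :: "real^'n \<Rightarrow> real^'n^'n"
    and X :: "real^'p^'n"
  assumes grad: "\<And>eta. (L has_derivative (\<lambda>v. G eta \<bullet> v)) (at eta)"
    and hess: "\<And>eta. (G has_derivative (\<lambda>v. H eta *v v)) (at eta)"
    and del: "del > 0"
    and bound: "\<And>eta. loewner_le (transpose (Xu_of U X) ** H eta ** Xu_of U X)
                                   ((2 * del) *\<^sub>R mat 1)"
  shows "concave_on (cl_box U) (\<lambda>t. hobj L X lam del t b0 b)"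
  unfolding concave_on_iff
proof (intro conjI convex_cl_box ballI allI impI)
  fix x y :: "real^'p" and u v :: real
  assume x: "x \<in> cl_box U" and y: "y \<in> cl_box U" and u: "0 \<le> u" and v: "0 \<le> v" and uv: "u + v = 1"
  define d where "d = x - y"
  define c where "c = lin_pred X y b0 b"
  have dU: "\<And>i. i \<notin> U \<Longrightarrow> d$i = 0" using x y by (simp add: d_def cl_box_def)
  define psi where "psi = (\<lambda>s. L (c + s *\<^sub>R (X *v (\<chi> i. d$i * b$i)))
            + del * (\<Sum>i\<in>UNIV. (1 - (y$i + s * d$i)^2) * (b$i)^2))"
  have cv: "convex_on UNIV (\<lambda>s. - psi s)"
    unfolding psi_def by (rule psi_concave[OF grad hess del bound dU])
  have "- psi ((1 - u) *\<^sub>R 0 + u *\<^sub>R 1) \<le> (1 - u) * (- psi 0) + u * (- psi 1)"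
    using convex_onD[OF cv, of u 0 1] u uv v by simp
  then have key: "psi u \<ge> (1 - u) * psi 0 + u * psi 1" by simp
  have hval: "hobj L X lam del (y + s *\<^sub>R d) b0 b = psi s + lam * (norm b)^2"
    if "y + s *\<^sub>R d \<in> cl_box U" for s
    using that by (simp add: hobj_cl_box psi_def lin_pred_affine c_def)
  have vv: "v = 1 - u" using uv by simp
  have e1: "u *\<^sub>R x + v *\<^sub>R y = y + u *\<^sub>R d"
    by (simp add: vec_eq_iff d_def vv algebra_simps)
  have zin: "u *\<^sub>R x + v *\<^sub>R y \<in> cl_box U"
    using convex_cl_box[of U] x y u v uv unfolding convex_def by blast
  have h0: "hobj L X lam del y b0 b = psi 0 + lam * (norm b)^2"
    using hval[of 0] y by simp
  have h1: "hobj L X lam del x b0 b = psi 1 + lam * (norm b)^2"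
    using hval[of 1] x by (simp add: d_def)
  have hu: "hobj L X lam del (u *\<^sub>R x + v *\<^sub>R y) b0 b = psi u + lam * (norm b)^2"
    using hval[of u] zin e1 by simp
  show "u * hobj L X lam del x b0 b + v * hobj L X lam del y b0 b
        \<le> hobj L X lam del (u *\<^sub>R x + v *\<^sub>R y) b0 b"
  proof -
    have "u * hobj L X lam del x b0 b + v * hobj L X lam del y b0 b
          = u * psi 1 + (1 - u) * psi 0 + lam * (norm b)^2"
      by (simp add: h0 h1 vv algebra_simps)
    also have "\<dots> \<le> psi u + lam * (norm b)^2" using key by simp
    also have "\<dots> = hobj L X lam del (u *\<^sub>R x + v *\<^sub>R y) b0 b" using hu by simp
    finally show ?thesis .
  qed
qed

lemma convex_open_box: "convex (open_box U)"
proof (rule convexI)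
  fix x y :: "real^'a" and u v :: real
  assume x: "x \<in> open_box U" and y: "y \<in> open_box U" and u: "0 \<le> u" and v: "0 \<le> v" and uv: "u + v = 1"
  show "u *\<^sub>R x + v *\<^sub>R y \<in> open_box U"
    unfolding open_box_def
  proof (intro CollectI conjI ballI allI impI)
    fix i assume "i \<in> U"
    then have a: "0 < x$i" "x$i < 1" "0 < y$i" "y$i < 1" using x y by (auto simp: open_box_def)
    have "u * min (x$i) (y$i) + v * min (x$i) (y$i) \<le> u * x $ i + v * y $ i"
      using u v by (intro add_mono mult_left_mono) auto
    moreover have "u * min (x$i) (y$i) + v * min (x$i) (y$i) = min (x$i) (y$i)"
    proof -
      have "u * m + v * m = (u + v) * m" for m :: real by (simp add: algebra_simps)
      then show ?thesis using uv by simp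
    qed
    ultimately show "0 < (u *\<^sub>R x + v *\<^sub>R y) $ i" using a by simp
    have "u * x $ i + v * y $ i \<le> u * max (x$i) (y$i) + v * max (x$i) (y$i)"
      using u v by (intro add_mono mult_left_mono) auto
    moreover have "u * max (x$i) (y$i) + v * max (x$i) (y$i) = max (x$i) (y$i)"
    proof -
      have "u * m + v * m = (u + v) * m" for m :: real by (simp add: algebra_simps)
      then show ?thesis using uv by simp
    qed
    ultimately show "(u *\<^sub>R x + v *\<^sub>R y) $ i < 1" using a by simp
  next
    fix i assume "i \<notin> U" then show "(u *\<^sub>R x + v *\<^sub>R y) $ i = 1" using x y uv by (simp add: open_box_def)
  qed
qed

lemma open_box_sub: "open_box U \<subseteq> cl_box U"
  by (auto simp: open_box_def cl_box_def)

lemma Tset_sub: "Tset U k \<subseteq> cl_box U"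
  by (auto simp: Tset_def cl_box_def)

lemma INF_min_lemma:
  fixes h :: "real^'p \<Rightarrow> 'b \<Rightarrow> real"
  assumes conc: "\<And>bb. concave_on (cl_box U) (\<lambda>t. h t bb)"
    and x: "x \<in> cl_box U" and y: "y \<in> cl_box U" and a: "0 \<le> a" "a \<le> 1"
  shows "min (INF bb\<in>UNIV. ereal (h x bb)) (INF bb\<in>UNIV. ereal (h y bb))
         \<le> (INF bb\<in>UNIV. ereal (h (a *\<^sub>R x + (1 - a) *\<^sub>R y) bb))"
proof (rule INF_greatest)
  fix bb :: 'b
  have c: "a * h x bb + (1 - a) * h y bb \<le> h (a *\<^sub>R x + (1 - a) *\<^sub>R y) bb"
    using conc[of bb] x y a unfolding concave_on_iff by auto
  have "min (h x bb) (h y bb) \<le> a * h x bb + (1 - a) * h y bb"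
  proof -
    have "a * min (h x bb) (h y bb) + (1 - a) * min (h x bb) (h y bb) \<le> a * h x bb + (1 - a) * h y bb"
      using a by (intro add_mono mult_left_mono) auto
    then show ?thesis by (simp add: algebra_simps)
  qed
  then have r: "min (h x bb) (h y bb) \<le> h (a *\<^sub>R x + (1 - a) *\<^sub>R y) bb" using c by linarith
  have "min (INF bb\<in>UNIV. ereal (h x bb)) (INF bb\<in>UNIV. ereal (h y bb)) \<le> min (ereal (h x bb)) (ereal (h y bb))"
    by (rule min.mono) (auto intro: INF_lower)
  also have "\<dots> \<le> ereal (h (a *\<^sub>R x + (1 - a) *\<^sub>R y) bb)" using r by (auto simp: min_def split: if_splits)
  finally show "min (INF bb\<in>UNIV. ereal (h x bb)) (INF bb\<in>UNIV. ereal (h y bb)) \<le> ereal (h (a *\<^sub>R x + (1 - a) *\<^sub>R y) bb)" .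
qed

lemma INF_concave_lemma:
  fixes h :: "real^'p \<Rightarrow> 'b \<Rightarrow> real"
  assumes conc: "\<And>bb. concave_on (cl_box U) (\<lambda>t. h t bb)"
    and x: "x \<in> cl_box U" and y: "y \<in> cl_box U" and a: "0 \<le> a" "a \<le> 1"
  shows "ereal a * (INF bb\<in>UNIV. ereal (h x bb)) + ereal (1 - a) * (INF bb\<in>UNIV. ereal (h y bb))
         \<le> (INF bb\<in>UNIV. ereal (h (a *\<^sub>R x + (1 - a) *\<^sub>R y) bb))"
proof (rule INF_greatest)
  fix bb :: 'b
  have c: "a * h x bb + (1 - a) * h y bb \<le> h (a *\<^sub>R x + (1 - a) *\<^sub>R y) bb"
    using conc[of bb] x y a unfolding concave_on_iff by auto
  have "ereal a * (INF bb\<in>UNIV. ereal (h x bb)) + ereal (1 - a) * (INF bb\<in>UNIV. ereal (h y bb))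
        \<le> ereal a * ereal (h x bb) + ereal (1 - a) * ereal (h y bb)"
  proof (rule add_mono)
    show "ereal a * (INF bb\<in>UNIV. ereal (h x bb)) \<le> ereal a * ereal (h x bb)"
      by (rule ereal_mult_left_mono) (use a in \<open>auto intro: INF_lower\<close>)
    show "ereal (1 - a) * (INF bb\<in>UNIV. ereal (h y bb)) \<le> ereal (1 - a) * ereal (h y bb)"
      by (rule ereal_mult_left_mono) (use a in \<open>auto intro: INF_lower\<close>)
  qed
  also have "\<dots> = ereal (a * h x bb + (1 - a) * h y bb)" by simp
  also have "\<dots> \<le> ereal (h (a *\<^sub>R x + (1 - a) *\<^sub>R y) bb)" using c by simp
  finally show "ereal a * (INF bb\<in>UNIV. ereal (h x bb)) + ereal (1 - a) * (INF bb\<in>UNIV. ereal (h y bb))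
         \<le> ereal (h (a *\<^sub>R x + (1 - a) *\<^sub>R y) bb)" .
qed

definition frac_set :: "'p set \<Rightarrow> real^'p \<Rightarrow> 'p set" where
  "frac_set U t = {i\<in>U. 0 < t$i \<and> t$i < 1}"

lemma Ints_strict_01: "(x::real) \<in> \<int> \<Longrightarrow> 0 < x \<Longrightarrow> x < 1 \<Longrightarrow> False"
  by (metis Ints_cases of_int_0_less_iff of_int_less_1_iff not_less zless_imp_add1_zle add_0 )

lemma two_frac:
  fixes t :: "real^'p"
  assumes t: "t \<in> Tset U k" and i: "i \<in> frac_set U t"
  shows "\<exists>j\<in>frac_set U t. j \<noteq> i"
proof (rule ccontr)
  assume "\<not> ?thesis"
  then have nf: "\<And>j. j \<in> U \<Longrightarrow> j \<noteq> i \<Longrightarrow> t$j = 0 \<or> t$j = 1"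
    using t unfolding frac_set_def Tset_def by force
  have iU: "i \<in> U" using i by (simp add: frac_set_def)
  have fin: "finite U" by simp
  have "(\<Sum>j\<in>U - {i}. t$j) \<in> \<int>"
    using nf by (intro Ints_sum) (metis DiffD1 DiffD2 Ints_0 Ints_1 singletonI)
  moreover have "(\<Sum>j\<in>U. t$j) = t$i + (\<Sum>j\<in>U - {i}. t$j)"
    using sum.remove[OF fin iU] .
  moreover have "(\<Sum>j\<in>U. t$j) = real k" using t by (simp add: Tset_def)
  ultimately have "t$i \<in> \<int>"
    by (metis Ints_diff Ints_of_nat add_diff_cancel_right')
  then show False using Ints_strict_01 i by (auto simp: frac_set_def)
qed


lemma corner_step:
  fixes h :: "real^'p \<Rightarrow> 'b \<Rightarrow> real"
  assumes conc: "\<And>bb. concave_on (cl_box U) (\<lambda>t. h t bb)"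
  shows "t \<in> Tset U k \<Longrightarrow> \<exists>s\<in>Sset U k. (INF bb\<in>UNIV. ereal (h s bb)) \<le> (INF bb\<in>UNIV. ereal (h t bb))"
proof (induction "card (frac_set U t)" arbitrary: t rule: less_induct)
  case less
  note t = less.prems
  show ?case
  proof (cases "frac_set U t = {}")
    case True
    have "t \<in> Sset U k"
      using t True unfolding Sset_def Tset_def frac_set_def by force
    then show ?thesis by blast
  next
    case False
    then obtain i where i: "i \<in> frac_set U t" by blast
    obtain j where j: "j \<in> frac_set U t" and ji: "j \<noteq> i" using two_frac[OF t i] by blast
    have iU: "i \<in> U" and ti: "0 < t$i" "t$i < 1" using i by (auto simp: frac_set_def)
    have jU: "j \<in> U" and tj: "0 < t$j" "t$j < 1" using j by (auto simp: frac_set_def)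
    define e :: "real^'p" where "e = (\<chi> l. (if l = i then 1 else 0) - (if l = j then 1 else 0))"
    have ei: "e$i = 1" and ej: "e$j = -1" and eo: "\<And>l. l \<noteq> i \<Longrightarrow> l \<noteq> j \<Longrightarrow> e$l = 0"
      using ji by (auto simp: e_def)
    have esum: "(\<Sum>l\<in>U. e$l) = 0"
      using iU jU by (simp add: e_def sum_subtractf)
    define \<alpha> where "\<alpha> = min (1 - t$i) (t$j)"
    define \<beta> where "\<beta> = min (t$i) (1 - t$j)"
    have ap: "\<alpha> > 0" and bp: "\<beta> > 0" using ti tj by (auto simp: \<alpha>_def \<beta>_def)
    define t1 where "t1 = t + \<alpha> *\<^sub>R e"
    define t2 where "t2 = t - \<beta> *\<^sub>R e"
    have tU: "\<And>l. l \<notin> U \<Longrightarrow> t$l = 1" and tb: "\<And>l. l \<in> U \<Longrightarrow> 0 \<le> t$l \<and> t$l \<le> 1"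
      and tsum: "(\<Sum>l\<in>U. t$l) = real k" using t by (auto simp: Tset_def)
    have eU: "\<And>l. l \<notin> U \<Longrightarrow> e$l = 0" using iU jU eo by metis
    have t1T: "t1 \<in> Tset U k"
      unfolding Tset_def
    proof (intro CollectI conjI ballI allI impI)
      fix l assume lU: "l \<in> U"
      show "0 \<le> t1$l" using tb[OF lU] ti tj ap ei ej eo[of l] by (cases "l = i"; cases "l = j") (auto simp: t1_def \<alpha>_def)
      show "t1$l \<le> 1" using tb[OF lU] ti tj ap ei ej eo[of l] by (cases "l = i"; cases "l = j") (auto simp: t1_def \<alpha>_def)
    next
      fix l assume "l \<notin> U" then show "t1$l = 1" using tU eU by (simp add: t1_def)
    next
      show "(\<Sum>l\<in>U. t1$l) = real k"
        using tsum esum by (simp add: t1_def sum.distrib sum_distrib_left[symmetric])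
    qed
    have t2T: "t2 \<in> Tset U k"
      unfolding Tset_def
    proof (intro CollectI conjI ballI allI impI)
      fix l assume lU: "l \<in> U"
      show "0 \<le> t2$l" using tb[OF lU] ti tj bp ei ej eo[of l] by (cases "l = i"; cases "l = j") (auto simp: t2_def \<beta>_def)
      show "t2$l \<le> 1" using tb[OF lU] ti tj bp ei ej eo[of l] by (cases "l = i"; cases "l = j") (auto simp: t2_def \<beta>_def)
    next
      fix l assume "l \<notin> U" then show "t2$l = 1" using tU eU by (simp add: t2_def)
    next
      show "(\<Sum>l\<in>U. t2$l) = real k"
        using tsum esum by (simp add: t2_def sum_subtractf sum_distrib_left[symmetric])
    qed
    have finF: "finite (frac_set U t)" by simp
    have c1: "card (frac_set U t1) < card (frac_set U t)"
    proof (rule psubset_card_mono[OF finF])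
      have sub: "frac_set U t1 \<subseteq> frac_set U t"
      proof
        fix l assume l: "l \<in> frac_set U t1"
        show "l \<in> frac_set U t"
        proof (cases "l = i \<or> l = j")
          case True then show ?thesis using i j by auto
        next
          case False then show ?thesis using l eo[of l] by (auto simp: frac_set_def t1_def)
        qed
      qed
      have "i \<notin> frac_set U t1 \<or> j \<notin> frac_set U t1"
        using ei ej by (auto simp: frac_set_def t1_def \<alpha>_def min_def)
      then show "frac_set U t1 \<subset> frac_set U t" using sub i j by blast
    qed
    have c2: "card (frac_set U t2) < card (frac_set U t)"
    proof (rule psubset_card_mono[OF finF])
      have sub: "frac_set U t2 \<subseteq> frac_set U t"
      proof
        fix l assume l: "l \<in> frac_set U t2"
        show "l \<in> frac_set U t"
        proof (cases "l = i \<or> l = j")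
          case True then show ?thesis using i j by auto
        next
          case False then show ?thesis using l eo[of l] by (auto simp: frac_set_def t2_def)
        qed
      qed
      have "i \<notin> frac_set U t2 \<or> j \<notin> frac_set U t2"
        using ei ej by (auto simp: frac_set_def t2_def \<beta>_def min_def)
      then show "frac_set U t2 \<subset> frac_set U t" using sub i j by blast
    qed
    obtain s1 where s1: "s1 \<in> Sset U k" "(INF bb\<in>UNIV. ereal (h s1 bb)) \<le> (INF bb\<in>UNIV. ereal (h t1 bb))"
      using less.hyps[OF c1 t1T] by blast
    obtain s2 where s2: "s2 \<in> Sset U k" "(INF bb\<in>UNIV. ereal (h s2 bb)) \<le> (INF bb\<in>UNIV. ereal (h t2 bb))"
      using less.hyps[OF c2 t2T] by blast
    define a where "a = \<beta> / (\<alpha> + \<beta>)"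
    have a01: "0 \<le> a" "a \<le> 1" using ap bp by (auto simp: a_def)
    have tcomb: "t = a *\<^sub>R t1 + (1 - a) *\<^sub>R t2"
    proof -
      have eq: "a * \<alpha> - (1 - a) * \<beta> = 0" using ap bp by (simp add: a_def field_simps)
      have "\<And>l. a * (t$l + \<alpha> * e$l) + (1 - a) * (t$l - \<beta> * e$l) = t$l + (a * \<alpha> - (1 - a) * \<beta>) * e$l"
        by (simp add: algebra_simps)
      then show ?thesis using eq by (simp add: vec_eq_iff t1_def t2_def)
    qed
    have "min (INF bb\<in>UNIV. ereal (h t1 bb)) (INF bb\<in>UNIV. ereal (h t2 bb))
          \<le> (INF bb\<in>UNIV. ereal (h t bb))"
    proof -
      have cb: "t1 \<in> cl_box U" "t2 \<in> cl_box U" using Tset_sub t1T t2T by auto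
      show ?thesis
        by (subst tcomb) (rule INF_min_lemma[where h=h and U=U and x=t1 and y=t2 and a=a, OF conc cb a01])
    qed
    then have mm: "min (INF bb\<in>UNIV. ereal (h s1 bb)) (INF bb\<in>UNIV. ereal (h s2 bb))
          \<le> (INF bb\<in>UNIV. ereal (h t bb))"
      using s1(2) s2(2) min.mono order_trans by blast
    show ?thesis
    proof (cases "(INF bb\<in>UNIV. ereal (h s1 bb)) \<le> (INF bb\<in>UNIV. ereal (h s2 bb))")
      case True then show ?thesis using mm s1(1) by (auto simp: min_def)
    next
      case False then show ?thesis using mm s2(1) by (auto simp: min_def)
    qed
  qed
qed

lemma Sset_finite: "finite (Sset U k)"
proof -
  have "Sset U k \<subseteq> (\<lambda>V. \<chi> i. if i \<in> V then 1 else 0) ` (UNIV :: 'a set set)"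
  proof
    fix s assume s: "s \<in> Sset U k"
    have "\<And>i. s$i = 0 \<or> s$i = 1" using s unfolding Sset_def by (metis (mono_tags, lifting) mem_Collect_eq)
    then have "s = (\<chi> i. if i \<in> {i. s$i = 1} then 1 else 0)" by (auto simp: vec_eq_iff)
    then show "s \<in> (\<lambda>V. \<chi> i. if i \<in> V then 1 else 0) ` (UNIV :: 'a set set)" by blast
  qed
  then show ?thesis by (rule finite_subset) simp
qed

lemma Sset_nonempty:
  assumes "k \<le> card U"
  shows "Sset U k \<noteq> {}"
proof -
  obtain V where V: "V \<subseteq> U" "card V = k" "finite V" using obtain_subset_with_card_n[OF assms] by metis
  define s :: "real^'a" where "s = (\<chi> i. if i \<in> V \<or> i \<notin> U then 1 else 0)"
  have "(\<Sum>i\<in>U. s$i) = (\<Sum>i\<in>U. if i \<in> V then 1 else 0)"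
    by (rule sum.cong) (auto simp: s_def)
  also have "\<dots> = real (card (U \<inter> V))" by (simp add: sum.If_cases)
  also have "U \<inter> V = V" using V by auto
  finally have "s \<in> Sset U k" using V by (auto simp: Sset_def s_def)
  then show ?thesis by blast
qed

theorem theorem1:
  fixes L :: "real^'n \<Rightarrow> real"
    and G :: "real^'n \<Rightarrow> real^'n"
    and H :: "real^'n \<Rightarrow> real^'n^'n"
    and X :: "real^'p^'n"
    and U :: "'p set"
    and lam del :: real
  assumes grad: "\<And>eta. (L has_derivative (\<lambda>v. G eta \<bullet> v)) (at eta)"
    and hess: "\<And>eta. (G has_derivative (\<lambda>v. H eta *v v)) (at eta)"
    and lam: "lam \<ge> 0"
    and del: "del > 0"
    and bound: "\<And>eta. loewner_le (transpose (Xu_of U X) ** H eta ** Xu_of U X)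
                                   ((2 * del) *\<^sub>R mat 1)"
  shows "(\<forall>b0 b. concave_on (open_box U) (\<lambda>t. hobj L X lam del t b0 b))
       \<and> ereal_concave_on (open_box U) (fobj L X lam del)
       \<and> (\<forall>k. k \<le> card U \<longrightarrow>
            (\<exists>s\<in>Sset U k. \<forall>t\<in>Tset U k. fobj L X lam del s \<le> fobj L X lam del t))"
proof (intro conjI allI impI)
  have hc: "\<And>b0 b. concave_on (cl_box U) (\<lambda>t. hobj L X lam del t b0 b)"
    by (rule h_concave[OF grad hess del bound])
  define hh where "hh = (\<lambda>t (bb::real \<times> (real^'p)). hobj L X lam del t (fst bb) (snd bb))"
  have hhc: "\<And>bb. concave_on (cl_box U) (\<lambda>t. hh t bb)" using hc by (simp add: hh_def)
  have fdef: "\<And>t. fobj L X lam del t = (INF bb\<in>UNIV. ereal (hh t bb))" by (simp add: fobj_def hh_def)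
  show "concave_on (open_box U) (\<lambda>t. hobj L X lam del t b0 b)" for b0 b
    using hc[of b0 b] unfolding concave_on_def
    by (rule convex_on_subset[OF _ open_box_sub convex_open_box])
  show "ereal_concave_on (open_box U) (fobj L X lam del)"
    unfolding ereal_concave_on_def fdef
  proof (intro ballI allI impI)
    fix x y and a :: real assume x: "x \<in> open_box U" and y: "y \<in> open_box U" and a: "0 \<le> a \<and> a \<le> 1"
    show "ereal a * (INF bb\<in>UNIV. ereal (hh x bb)) + ereal (1 - a) * (INF bb\<in>UNIV. ereal (hh y bb))
         \<le> (INF bb\<in>UNIV. ereal (hh (a *\<^sub>R x + (1 - a) *\<^sub>R y) bb))"
      using INF_concave_lemma[where h=hh and U=U and x=x and y=y and a=a, OF hhc] x y a open_box_sub
      by blast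
  qed
  fix k assume k: "k \<le> card U"
  let ?f = "fobj L X lam del"
  have fin: "finite (?f ` Sset U k)" using Sset_finite by blast
  have ne: "?f ` Sset U k \<noteq> {}" using Sset_nonempty[OF k] by blast
  obtain s where s: "s \<in> Sset U k" "?f s = Min (?f ` Sset U k)"
    using Min_in[OF fin ne] by auto
  show "\<exists>s\<in>Sset U k. \<forall>t\<in>Tset U k. ?f s \<le> ?f t"
  proof (intro bexI[OF _ s(1)] ballI)
    fix t assume t: "t \<in> Tset U k"
    obtain s' where s': "s' \<in> Sset U k" "(INF bb\<in>UNIV. ereal (hh s' bb)) \<le> (INF bb\<in>UNIV. ereal (hh t bb))"
      using corner_step[where h=hh and U=U, OF hhc t] by blast
    have "?f s \<le> ?f s'" using s s' fin by simp
    also have "\<dots> \<le> ?f t" using s' by (simp add: fdef)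
    finally show "?f s \<le> ?f t" .
  qed
qed

end
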